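(* Let $\sigma$ be the morphism on the four-letter alphabet $\{1,1^*,2,2^*\}$ given by $1\to 2$, $1^*\to 2^*$, $2\to 1^*2^*$, $2^*\to 21$. Then $\sigma^3(2^* )$ begins with $2^*$, and the infinite sequence $\mathbf u=\lim_{n\to\infty}\sigma^{3n}(2^* )$ is not $q$-automatic for any $q\ge 2$. More precisely, $\mathbf u$ is a concatenation of the blocks $A=2^*2$ and $B=11^*$, and the resulting sequence over $\{A,B\}$ is the fixed point of the morphism $A\to ABABA$, $B\to ABA$, which is a Sturmian sequence.
   Context: A Sturmian sequence is an infinite sequence over a two-letter alphabet having exactly $n+1$ distinct factors of length $n$ for every $n\ge0$. For an integer $q\ge 2$, a sequence is $q$-automatic if it is the image under a letter-to-letter map of a fixed point of a morphism all of whose letter-images have length $q$. *)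

theory Defs
  imports Main
begin

datatype letter = L1 | L1s | L2 | L2s

fun sigma :: "letter \<Rightarrow> letter list" where
  "sigma L1 = [L2]"
| "sigma L1s = [L2s]"
| "sigma L2 = [L1s, L2s]"
| "sigma L2s = [L2, L1]"

definition sigma_w :: "letter list \<Rightarrow> letter list" where
  "sigma_w w = concat (map sigma w)"

datatype AB = A | B

fun block :: "AB \<Rightarrow> letter list" where
  "block A = [L2s, L2]"
| "block B = [L1, L1s]"

fun tau :: "AB \<Rightarrow> AB list" where
  "tau A = [A, B, A, B, A]"
| "tau B = [A, B, A]"

definition tau_w :: "AB list \<Rightarrow> AB list" where
  "tau_w w = concat (map tau w)"

definition word_limit :: "(nat \<Rightarrow> 'a) \<Rightarrow> (nat \<Rightarrow> 'a list) \<Rightarrow> bool" where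
  "word_limit x ws \<longleftrightarrow>
     (\<forall>N. \<exists>n0. \<forall>n\<ge>n0. N \<le> length (ws n) \<and> (\<forall>i<N. ws n ! i = x i))"

text \<open>q-automatic: x is the image under a letter-to-letter map c of a fixed point y of a
  q-uniform morphism h on a finite alphabet S (letters coded as natural numbers;
  h(y) = y means y (q*i+j) is the j-th letter of h(y i)).\<close>
definition q_automatic :: "nat \<Rightarrow> (nat \<Rightarrow> 'b) \<Rightarrow> bool" where
  "q_automatic q x \<longleftrightarrow>
     (\<exists>(S::nat set) (h::nat \<Rightarrow> nat list) (y::nat \<Rightarrow> nat) (c::nat \<Rightarrow> 'b).
        finite S
      \<and> (\<forall>a\<in>S. length (h a) = q \<and> set (h a) \<subseteq> S)
      \<and> (\<forall>i. y i \<in> S)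
      \<and> (\<forall>i j. j < q \<longrightarrow> y (q * i + j) = h (y i) ! j)
      \<and> (\<forall>i. x i = c (y i)))"

definition factors :: "(nat \<Rightarrow> 'a) \<Rightarrow> nat \<Rightarrow> 'a list set" where
  "factors x n = {map x [i..<i+n] | i. True}"

definition sturmian :: "(nat \<Rightarrow> AB) \<Rightarrow> bool" where
  "sturmian x \<longleftrightarrow> (\<forall>n. card (factors x n) = n + 1)"

end

theory Submission imports Defs "HOL-Analysis.Kronecker_Approximation_Theorem" begin

definition al :: real where "al = (3 - sqrt 5)/2"
lemma s5: "sqrt 5 * sqrt 5 = (5::real)" by simp
lemma al_sq: "al * al = 3*al - 1"
proof -
  have "al * al = (9 - 6 * sqrt 5 + sqrt 5 * sqrt 5)/4" unfolding al_def by (simp add: algebra_simps)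
  also have "\<dots> = 3*al - 1" unfolding s5 al_def by (simp add: field_simps)
  finally show ?thesis .
qed
lemma sqrt5_bounds: "2.236 < sqrt (5::real)" "sqrt (5::real) < 2.2361"
proof -
  show "2.236 < sqrt (5::real)" by (rule real_less_rsqrt) (simp add: power2_eq_square)
  have "sqrt (5::real) < sqrt (2.2361^2)" by (rule real_sqrt_less_mono) (simp add: power2_eq_square)
  then show "sqrt (5::real) < 2.2361" by simp
qed
lemma al_lo: "0.3819 < al" and al_hi: "al < 0.382"
  using sqrt5_bounds unfolding al_def by auto
lemma al_irr: "al \<notin> \<rat>"
proof
  assume "al \<in> \<rat>"
  then obtain m n :: nat where n0: "n \<noteq> 0" and e: "\<bar>al\<bar> = real m / real n" and cop: "coprime m n"
    by (rule Rats_abs_nat_div_natE)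
  have ea: "al = real m / real n" using e al_lo by simp
  have "real m * real m = 3 * real m * real n - real n * real n"
    using al_sq n0 unfolding ea by (simp add: field_simps)
  then have "real (m*m + n*n) = real (3*m*n)" by simp
  then have eq: "m*m + n*n = 3*m*n" by (simp only: of_nat_eq_iff)
  have "n dvd m*m + n*n" using eq by simp
  then have "n dvd m*m" by (simp add: dvd_add_left_iff)
  moreover have "coprime n (m*m)" using cop by (simp add: coprime_commute)
  ultimately have "n dvd 1" by (metis coprime_common_divisor dvd_refl)
  then have "n = 1" by simp
  then have "al = real m" using ea by simp
  then show False using al_lo al_hi by (cases m) auto
qed

lemma not_int: "real n * al + 1/2 \<noteq> of_int z"
proof
  assume h: "real n * al + 1/2 = of_int z"
  show False
  proof (cases "n = 0")
    case True
    then have "2 * of_int z = (1::real)" using h by simp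
    then have "2 * z = 1" by linarith
    then show False by presburger
  next
    case False
    then have "al = (of_int z - 1/2) / real n" using h by (simp add: field_simps)
    also have "\<dots> \<in> \<rat>" by (intro Rats_divide Rats_diff) auto
    finally show False using al_irr by simp
  qed
qed

definition M :: "nat \<Rightarrow> int" where "M n = \<lfloor>real n * al + 1/2\<rfloor>"
definition th :: "nat \<Rightarrow> real" where "th n = real n * al + 1/2 - of_int (M n)"
definition vv :: "nat \<Rightarrow> AB" where "vv k = (if M (Suc k) = M k + 1 then B else A)"

lemma th_pos: "0 < th n" and th_lt1: "th n < 1"
proof -
  have "of_int (M n) \<le> real n * al + 1/2" "real n * al + 1/2 < of_int (M n) + 1"
    unfolding M_def by linarith+
  moreover have "real n * al + 1/2 \<noteq> of_int (M n)" by (rule not_int)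
  ultimately show "0 < th n" "th n < 1" unfolding th_def by auto
qed

lemma M_Suc: "M (Suc n) = M n + \<lfloor>th n + al\<rfloor>"
proof -
  have "real (Suc n) * al + 1/2 = (th n + al) + of_int (M n)" unfolding th_def by (simp add: algebra_simps)
  then show ?thesis unfolding M_def by (metis floor_add_int M_def add.commute)
qed

lemma vv_B: "vv n = B \<longleftrightarrow> 1 - al \<le> th n"
proof -
  have a: "0 < th n" "th n < 1" by (rule th_pos, rule th_lt1)
  show ?thesis
  proof (cases "1 - al \<le> th n")
    case True
    then have "\<lfloor>th n + al\<rfloor> = 1" using a al_lo al_hi by (simp add: floor_eq_iff)
    then show ?thesis using True by (simp add: vv_def M_Suc)
  next
    case False
    then have "\<lfloor>th n + al\<rfloor> = 0" using a al_lo al_hi by (simp add: floor_eq_iff)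
    then show ?thesis using False by (simp add: vv_def M_Suc)
  qed
qed

lemma M_Suc_vv: "M (Suc n) = M n + (if vv n = B then 1 else 0)"
proof -
  have a: "0 < th n" "th n < 1" by (rule th_pos, rule th_lt1)
  show ?thesis
  proof (cases "1 - al \<le> th n")
    case True
    then have "\<lfloor>th n + al\<rfloor> = 1" using a al_lo al_hi by (simp add: floor_eq_iff)
    then show ?thesis using True vv_B by (simp add: M_Suc)
  next
    case False
    then have "\<lfloor>th n + al\<rfloor> = 0" using a al_lo al_hi by (simp add: floor_eq_iff)
    then show ?thesis using False vv_B by (simp add: M_Suc)
  qed
qed

lemma M0: "M 0 = 0" by (simp add: M_def)

lemma M_le: "2 * M n \<le> 5 * int n"
proof -
  show ?thesis
  proof (cases "n = 0")
    case True then show ?thesis by (simp add: M0)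
  next
    case False
    have "real n * al \<le> real n * (2/5)" using al_hi by (intro mult_left_mono) auto
    moreover have "of_int (M n) \<le> real n * al + 1/2" unfolding M_def by linarith
    moreover have "1 \<le> real n" using False by simp
    ultimately have "real_of_int (2 * M n) < real_of_int (5 * int n)" by linarith
    then show ?thesis by linarith
  qed
qed

lemma KL_M:
  "M (nat (5 * int n - 2 * M n) + k)
     = 2 * int n - M n + \<lfloor>(1/2 - th n) * (1 - 2*al) + 1/2 + real k * al\<rfloor>"
proof -
  have r: "real (nat (5 * int n - 2 * M n)) = 5 * real n - 2 * of_int (M n)"
    using M_le by simp
  have eq: "real (nat (5 * int n - 2 * M n) + k) * al + 1/2
      = ((1/2 - th n) * (1 - 2*al) + 1/2 + real k * al) + of_int (2 * int n - M n)"
  proof -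
    have "al * (al * (real n * 2)) = (al*al) * (real n * 2)" by (simp only: mult.assoc)
    also have "\<dots> = (3*al - 1)*(real n*2)" by (simp only: al_sq)
    also have "\<dots> = 6*al*real n - 2*real n" by (simp add: algebra_simps)
    finally have e: "al * (al * (real n * 2)) = 6*al*real n - 2*real n" .
    show ?thesis unfolding of_nat_add r th_def apply (simp add: algebra_simps) using e by linarith
  qed
  have f: "M (nat (5 * int n - 2 * M n) + k) = \<lfloor>real (nat (5 * int n - 2 * M n) + k) * al + 1/2\<rfloor>"
    by (rule M_def)
  have g: "\<lfloor>2 * real n\<rfloor> = 2 * int n" using floor_of_int[of "2*int n"] by simp
  show ?thesis unfolding f eq floor_add_int by (simp add: g)
qed

lemma al_sq': "(al - 1/2) * (1 - 2*al) = 3/2 - 4*al"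
proof -
  have "(al - 1/2) * (1 - 2*al) = 2*al - 1/2 - 2*(al*al)" by (simp add: algebra_simps)
  then show ?thesis by (simp add: al_sq)
qed

lemma KL:
  assumes "j < length (tau (vv n))"
  shows "vv (nat (5 * int n - 2 * M n) + j) = tau (vv n) ! j"
proof -
  define P where "P = nat (5 * int n - 2 * M n)"
  define t where "t = (1/2 - th n) * (1 - 2*al)"
  have Mk: "\<And>k. M (P + k) = 2 * int n - M n + \<lfloor>t + 1/2 + real k * al\<rfloor>"
    unfolding P_def t_def by (rule KL_M)
  have vvP: "\<And>j. vv (P + j) = (if \<lfloor>t + 1/2 + (real j + 1) * al\<rfloor> = \<lfloor>t + 1/2 + real j * al\<rfloor> + 1 then B else A)"
  proof -
    fix j
    have "M (Suc (P + j)) = M (P + Suc j)" by simp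
    then show "vv (P + j) = (if \<lfloor>t + 1/2 + (real j + 1) * al\<rfloor> = \<lfloor>t + 1/2 + real j * al\<rfloor> + 1 then B else A)"
      unfolding vv_def using Mk[of j] Mk[of "Suc j"] by (simp add: algebra_simps)
  qed
  have th: "0 < th n" "th n < 1" by (rule th_pos, rule th_lt1)
  have pos: "0 < 1 - 2*al" using al_hi by simp
  show ?thesis
  proof (cases "vv n")
    case A
    then have "th n < 1 - al" using vv_B[of n] by (cases "1 - al \<le> th n") auto
    then have "(al - 1/2) * (1 - 2*al) < (1/2 - th n) * (1 - 2*al)"
      using pos by (intro mult_strict_right_mono) auto
    then have t1: "3/2 - 4*al < t" unfolding t_def al_sq' .
    have "(1/2 - th n) * (1 - 2*al) < (1/2) * (1 - 2*al)"
      using pos th by (intro mult_strict_right_mono) auto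
    then have t2: "t < 1/2 - al" unfolding t_def by simp
    have g0: "\<lfloor>t + 1/2\<rfloor> = 0" using t1 t2 al_lo al_hi by (simp add: floor_eq_iff)
    have g1: "\<lfloor>t + 1/2 + al\<rfloor> = 0" using t1 t2 al_lo al_hi by (simp add: floor_eq_iff)
    have g2: "\<lfloor>t + 1/2 + 2*al\<rfloor> = 1" using t1 t2 al_lo al_hi by (simp add: floor_eq_iff)
    have g3: "\<lfloor>t + 1/2 + 3*al\<rfloor> = 1" using t1 t2 al_lo al_hi by (simp add: floor_eq_iff)
    have g4: "\<lfloor>t + 1/2 + 4*al\<rfloor> = 2" using t1 t2 al_lo al_hi by (simp add: floor_eq_iff)
    have g5: "\<lfloor>t + 1/2 + 5*al\<rfloor> = 2" using t1 t2 al_lo al_hi by (simp add: floor_eq_iff)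
    have "j < 5" using assms A by simp
    then have "j = 0 \<or> j = 1 \<or> j = 2 \<or> j = 3 \<or> j = 4" by auto
    then show ?thesis
      using vvP[of 0] vvP[of 1] vvP[of 2] vvP[of 3] vvP[of 4] g0 g1 g2 g3 g4 g5 A
      unfolding P_def[symmetric] by auto
  next
    case B
    then have "1 - al \<le> th n" using vv_B[of n] by simp
    then have "(1/2 - th n) * (1 - 2*al) \<le> (al - 1/2) * (1 - 2*al)"
      using pos by (intro mult_right_mono) auto
    then have t1: "t \<le> 3/2 - 4*al" unfolding t_def al_sq' .
    have "(-1/2) * (1 - 2*al) < (1/2 - th n) * (1 - 2*al)"
      using pos th by (intro mult_strict_right_mono) auto
    then have t2: "al - 1/2 < t" unfolding t_def by (simp add: algebra_simps)
    have g0: "\<lfloor>t + 1/2\<rfloor> = 0" using t1 t2 al_lo al_hi by (simp add: floor_eq_iff)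
    have g1: "\<lfloor>t + 1/2 + al\<rfloor> = 0" using t1 t2 al_lo al_hi by (simp add: floor_eq_iff)
    have g2: "\<lfloor>t + 1/2 + 2*al\<rfloor> = 1" using t1 t2 al_lo al_hi by (simp add: floor_eq_iff)
    have g3: "\<lfloor>t + 1/2 + 3*al\<rfloor> = 1" using t1 t2 al_lo al_hi by (simp add: floor_eq_iff)
    have "j < 3" using assms B by simp
    then have "j = 0 \<or> j = 1 \<or> j = 2" by auto
    then show ?thesis
      using vvP[of 0] vvP[of 1] vvP[of 2] g0 g1 g2 g3 B
      unfolding P_def[symmetric] by auto
  qed
qed


definition WD :: "real \<Rightarrow> nat \<Rightarrow> AB list" where
  "WD \<theta> n = map (\<lambda>j. if \<lfloor>\<theta> + real (Suc j) * al\<rfloor> = \<lfloor>\<theta> + real j * al\<rfloor> + 1 then B else A) [0..<n]"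

lemma M_add: "M (i + j) = M i + \<lfloor>th i + real j * al\<rfloor>"
proof -
  have "real (i + j) * al + 1/2 = (th i + real j * al) + of_int (M i)"
    unfolding th_def by (simp add: algebra_simps)
  then show ?thesis unfolding M_def[of "i + j"] by simp
qed

lemma fac_eq: "map vv [i..<i+n] = WD (th i) n"
proof (rule nth_equalityI)
  show "length (map vv [i..<i + n]) = length (WD (th i) n)" by (simp add: WD_def)
  fix j assume "j < length (map vv [i..<i + n])"
  then have j: "j < n" by simp
  have "M (Suc (i + j)) = M (i + Suc j)" by simp
  then show "map vv [i..<i + n] ! j = WD (th i) n ! j"
    using j M_add[of i j] M_add[of i "Suc j"] unfolding vv_def WD_def by simp
qed

definition p :: "nat \<Rightarrow> real" where "p j = 1 - frac (real j * al)"

lemma frac_ne0: "0 < j \<Longrightarrow> frac (real j * al) \<noteq> 0"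
proof
  assume j: "0 < j" and f: "frac (real j * al) = 0"
  then have "real j * al \<in> \<int>" by (simp add: frac_eq_0_iff)
  then obtain z where "real j * al = of_int z" by (auto elim: Ints_cases)
  then have "al = of_int z / real j" using j by (simp add: field_simps)
  also have "\<dots> \<in> \<rat>" by auto
  finally show False using al_irr by simp
qed

lemma p_bounds: "0 < j \<Longrightarrow> 0 < p j \<and> p j < 1"
  using frac_ne0[of j] frac_lt_1[of "real j * al"] frac_ge_0[of "real j * al"] unfolding p_def by auto

lemma p_inj: "0 < j \<Longrightarrow> 0 < j' \<Longrightarrow> p j = p j' \<Longrightarrow> j = j'"
proof (rule ccontr)
  assume j: "0 < j" "0 < j'" and e: "p j = p j'" and ne: "j \<noteq> j'"
  then have "real j * al - of_int \<lfloor>real j * al\<rfloor> = real j' * al - of_int \<lfloor>real j' * al\<rfloor>"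
    unfolding p_def frac_def by simp
  then have "(real j - real j') * al = of_int (\<lfloor>real j * al\<rfloor> - \<lfloor>real j' * al\<rfloor>)"
    by (simp add: algebra_simps)
  moreover have "real j - real j' \<noteq> 0" using ne by simp
  ultimately have "al = of_int (\<lfloor>real j * al\<rfloor> - \<lfloor>real j' * al\<rfloor>) / (real j - real j')"
    by (simp add: field_simps)
  also have "\<dots> \<in> \<rat>" by (intro Rats_divide Rats_diff) auto
  finally show False using al_irr by simp
qed

lemma floor_p:
  assumes "0 < j" "0 \<le> \<theta>" "\<theta> < 1"
  shows "\<lfloor>\<theta> + real j * al\<rfloor> = \<lfloor>real j * al\<rfloor> + (if p j \<le> \<theta> then 1 else 0)"
proof -
  have e: "\<theta> + real j * al = (\<theta> + frac (real j * al)) + of_int \<lfloor>real j * al\<rfloor>"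
    unfolding frac_def by simp
  have "0 \<le> frac (real j * al)" "frac (real j * al) < 1" by (auto simp: frac_lt_1)
  then have "\<lfloor>\<theta> + frac (real j * al)\<rfloor> = (if p j \<le> \<theta> then 1 else 0)"
    using assms unfolding p_def by (auto simp: floor_eq_iff)
  then show ?thesis unfolding e floor_add_int by simp
qed

lemma floor_step:
  "\<lfloor>\<theta> + real (Suc j) * al\<rfloor> = \<lfloor>\<theta> + real j * al\<rfloor> \<or> \<lfloor>\<theta> + real (Suc j) * al\<rfloor> = \<lfloor>\<theta> + real j * al\<rfloor> + 1"
proof -
  define y where "y = \<theta> + real j * al"
  have e: "\<theta> + real (Suc j) * al = y + al" unfolding y_def by (simp add: algebra_simps)
  have al0: "0 < al" "al < 1" using al_lo al_hi by auto
  have a: "\<lfloor>y\<rfloor> \<le> \<lfloor>y + al\<rfloor>" by (rule floor_mono) (use al0 in simp)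
  have "y < of_int \<lfloor>y\<rfloor> + 1" by linarith
  then have "y + al < of_int \<lfloor>y\<rfloor> + 2" using al0 by linarith
  then have "y + al < of_int (\<lfloor>y\<rfloor> + 2)" by simp
  then have b: "\<lfloor>y + al\<rfloor> < \<lfloor>y\<rfloor> + 2" by (simp add: floor_less_iff)
  show ?thesis unfolding e y_def[symmetric] using a b by linarith
qed

lemma WD_eq:
  assumes "0 \<le> \<theta>" "\<theta> < 1" "0 \<le> \<theta>'" "\<theta>' < 1"
  shows "WD \<theta> n = WD \<theta>' n \<longleftrightarrow> (\<forall>j\<in>{1..n}. (p j \<le> \<theta> \<longleftrightarrow> p j \<le> \<theta>'))"
proof -
  have fl0: "\<lfloor>\<theta>\<rfloor> = 0" "\<lfloor>\<theta>'\<rfloor> = 0" using assms by (auto simp: floor_eq_iff)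
  have Fj: "\<lfloor>\<theta> + real j * al\<rfloor> = \<lfloor>\<theta>' + real j * al\<rfloor> \<longleftrightarrow> (p j \<le> \<theta> \<longleftrightarrow> p j \<le> \<theta>')"
    if "0 < j" for j
    using floor_p[OF that assms(1,2)] floor_p[OF that assms(3,4)] by auto
  show ?thesis
  proof
    assume eq: "WD \<theta> n = WD \<theta>' n"
    have "\<forall>j\<le>n. \<lfloor>\<theta> + real j * al\<rfloor> = \<lfloor>\<theta>' + real j * al\<rfloor>"
    proof (intro allI impI)
      fix j show "j \<le> n \<Longrightarrow> \<lfloor>\<theta> + real j * al\<rfloor> = \<lfloor>\<theta>' + real j * al\<rfloor>"
      proof (induction j)
        case 0 then show ?case using fl0 by simp
      next
        case (Suc j)
        then have jn: "j < n" by simp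
        have "WD \<theta> n ! j = WD \<theta>' n ! j" using eq by simp
        then have "(\<lfloor>\<theta> + real (Suc j) * al\<rfloor> = \<lfloor>\<theta> + real j * al\<rfloor> + 1) \<longleftrightarrow>
                   (\<lfloor>\<theta>' + real (Suc j) * al\<rfloor> = \<lfloor>\<theta>' + real j * al\<rfloor> + 1)"
          using jn unfolding WD_def by (auto split: if_splits)
        then show ?case using Suc floor_step[of \<theta> j] floor_step[of \<theta>' j] jn by auto
      qed
    qed
    then show "\<forall>j\<in>{1..n}. (p j \<le> \<theta> \<longleftrightarrow> p j \<le> \<theta>')" using Fj by auto
  next
    assume h: "\<forall>j\<in>{1..n}. (p j \<le> \<theta> \<longleftrightarrow> p j \<le> \<theta>')"
    have F: "\<lfloor>\<theta> + real j * al\<rfloor> = \<lfloor>\<theta>' + real j * al\<rfloor>" if "j \<le> n" for j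
    proof (cases "j = 0")
      case True then show ?thesis using fl0 by simp
    next
      case False then show ?thesis using Fj h that by auto
    qed
    show "WD \<theta> n = WD \<theta>' n" unfolding WD_def
      by (rule map_cong) (use F in \<open>auto simp del: of_nat_Suc\<close>)
  qed
qed

lemma card_image_cong:
  assumes "\<And>x y. x \<in> T \<Longrightarrow> y \<in> T \<Longrightarrow> f x = f y \<longleftrightarrow> g x = g y"
  shows "card (f ` T) = card (g ` T)"
proof -
  define \<phi> where "\<phi> b = f (inv_into T g b)" for b
  have "bij_betw \<phi> (g ` T) (f ` T)"
  proof (rule bij_betw_imageI)
    show "inj_on \<phi> (g ` T)"
    proof (rule inj_onI)
      fix b1 b2 assume b: "b1 \<in> g ` T" "b2 \<in> g ` T" "\<phi> b1 = \<phi> b2"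
      have i: "inv_into T g b1 \<in> T" "inv_into T g b2 \<in> T" using b by (auto intro: inv_into_into)
      have "g (inv_into T g b1) = g (inv_into T g b2)"
        using assms[OF i] b(3) unfolding \<phi>_def by simp
      then show "b1 = b2" using b by (simp add: f_inv_into_f)
    qed
    show "\<phi> ` g ` T = f ` T"
    proof
      show "\<phi> ` g ` T \<subseteq> f ` T" unfolding \<phi>_def by (auto intro: inv_into_into)
      show "f ` T \<subseteq> \<phi> ` g ` T"
      proof
        fix b assume "b \<in> f ` T"
        then obtain x where x: "x \<in> T" "b = f x" by blast
        have i: "inv_into T g (g x) \<in> T" using x by (auto intro: inv_into_into)
        have "g (inv_into T g (g x)) = g x" using x by (simp add: f_inv_into_f)
        then have "f (inv_into T g (g x)) = f x" using assms[OF i x(1)] by simp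
        then have "b = \<phi> (g x)" unfolding \<phi>_def using x by simp
        moreover have "g x \<in> g ` T" using x by simp
        ultimately show "b \<in> \<phi> ` g ` T" by blast
      qed
    qed
  qed
  then show ?thesis by (metis bij_betw_same_card)
qed

lemma density:
  assumes "0 \<le> x" "x < 1"
  shows "\<exists>i. x \<le> th i \<and> (\<forall>l\<in>{1..n}. (p l \<le> th i \<longleftrightarrow> p l \<le> x))"
proof -
  define Xs where "Xs = {p l - x | l. l \<in> {1..n} \<and> p l > x} \<union> {1 - x}"
  have fXs: "finite Xs" unfolding Xs_def by auto
  have pos: "\<forall>a\<in>Xs. 0 < a" unfolding Xs_def using assms by auto
  define e where "e = Min Xs"
  have eX: "e \<in> Xs" unfolding e_def using fXs by (intro Min_in) (auto simp: Xs_def)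
  have e0: "0 < e" using eX pos by blast
  have ele: "e \<le> a" if "a \<in> Xs" for a unfolding e_def using fXs that by simp
  have e1: "x + e \<le> 1" using ele[of "1 - x"] unfolding Xs_def by auto
  have epl: "x + e \<le> p l" if "l \<in> {1..n}" "p l > x" for l
  proof -
    have "p l - x \<in> Xs" unfolding Xs_def using that by blast
    then show ?thesis using ele by fastforce
  qed
  have e2: "0 < e/2" using e0 by simp
  obtain h k where k: "k > 0" "\<bar>of_int k * al - of_int h - (x + e/2 - 1/2)\<bar> < e/2"
    using sequence_of_fractional_parts_is_dense[OF al_irr e2, of "x + e/2 - 1/2"] by blast
  define i where "i = nat k"
  have ri: "real i = of_int k" unfolding i_def using k by simp
  define w where "w = real i * al + 1/2 - of_int h"
  have "- (e/2) < of_int k * al - of_int h - (x + e/2 - 1/2)" "of_int k * al - of_int h - (x + e/2 - 1/2) < e/2"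
    using k(2) unfolding abs_less_iff by auto
  then have w: "x < w" "w < x + e" unfolding w_def ri by linarith+
  have "M i = h" unfolding M_def using w e1 assms unfolding w_def by (simp add: floor_eq_iff)
  then have thw: "th i = w" unfolding th_def w_def by simp
  show ?thesis
  proof (intro exI[of _ i] conjI ballI)
    show "x \<le> th i" using thw w by simp
    fix l assume l: "l \<in> {1..n}"
    show "p l \<le> th i \<longleftrightarrow> p l \<le> x"
    proof (cases "p l > x")
      case True then show ?thesis using epl[OF l True] thw w by auto
    next
      case False then show ?thesis using thw w by auto
    qed
  qed
qed

lemma th_01: "0 \<le> th i" "th i < 1" using th_pos[of i] th_lt1[of i] by auto

lemma vv_sturmian: "sturmian vv"
  unfolding sturmian_def
proof
  fix n
  define T where "T = range th"
  define SS where "SS \<theta> = {j \<in> {1..n}. p j \<le> \<theta>}" for \<theta>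
  have fac: "factors vv n = (\<lambda>\<theta>. WD \<theta> n) ` T"
    unfolding factors_def T_def using fac_eq by auto
  have T01: "\<theta> \<in> T \<Longrightarrow> 0 \<le> \<theta> \<and> \<theta> < 1" for \<theta> unfolding T_def using th_01 by auto
  have c1: "card ((\<lambda>\<theta>. WD \<theta> n) ` T) = card (SS ` T)"
    by (rule card_image_cong) (use T01 WD_eq in \<open>auto simp: SS_def set_eq_iff\<close>)
  have SSsub: "SS \<theta> \<subseteq> {1..n}" for \<theta> unfolding SS_def by auto
  have SSmono: "\<theta> \<le> \<theta>' \<Longrightarrow> SS \<theta> \<subseteq> SS \<theta>'" for \<theta> \<theta>' unfolding SS_def by auto
  have fin: "finite (SS ` T)" by (rule finite_subset[of _ "Pow {1..n}"]) (use SSsub in auto)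
  have injc: "inj_on card (SS ` T)"
  proof (rule inj_onI)
    fix A1 A2 assume a: "A1 \<in> SS ` T" "A2 \<in> SS ` T" "card A1 = card A2"
    then obtain t1 t2 where t: "A1 = SS t1" "A2 = SS t2" by blast
    have f: "finite (SS t1)" "finite (SS t2)" using SSsub by (auto intro: finite_subset)
    show "A1 = A2"
    proof (cases "t1 \<le> t2")
      case True then show ?thesis using SSmono[OF True] f a(3) t by (simp add: card_subset_eq)
    next
      case False then have "t2 \<le> t1" by simp
      from SSmono[OF this] show ?thesis using f a(3) t by (metis card_subset_eq)
    qed
  qed
  have up: "card (SS ` T) \<le> n + 1"
  proof -
    have "card (SS ` T) = card (card ` SS ` T)" using injc by (simp add: card_image)
    also have "\<dots> \<le> card {0..n}"
    proof (rule card_mono)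
      have "card (SS \<theta>) \<le> n" for \<theta>
        using card_mono[OF _ SSsub[of \<theta>]] by simp
      then show "card ` SS ` T \<subseteq> {0..n}" by auto
    qed simp
    finally show ?thesis by simp
  qed
  define x where "x k = (if k = 0 then 0 else p k)" for k
  have x01: "0 \<le> x k \<and> x k < 1" for k unfolding x_def using p_bounds[of k] by auto
  define tk where "tk k = th (SOME i. x k \<le> th i \<and> (\<forall>l\<in>{1..n}. (p l \<le> th i \<longleftrightarrow> p l \<le> x k)))" for k
  have tk: "x k \<le> tk k \<and> (\<forall>l\<in>{1..n}. (p l \<le> tk k \<longleftrightarrow> p l \<le> x k))" for k
  proof -
    have ex: "\<exists>i. x k \<le> th i \<and> (\<forall>l\<in>{1..n}. (p l \<le> th i \<longleftrightarrow> p l \<le> x k))"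
      using density[of "x k" n] x01[of k] by blast
    show ?thesis unfolding tk_def by (rule someI_ex[OF ex])
  qed
  have SStk: "SS (tk k) = {l \<in> {1..n}. p l \<le> x k}" for k unfolding SS_def using tk[of k] by auto
  have tkT: "tk k \<in> T" for k unfolding tk_def T_def by simp
  have injk: "inj_on (\<lambda>k. SS (tk k)) {0..n}"
  proof (rule inj_onI)
    fix k1 k2 assume k: "k1 \<in> {0..n}" "k2 \<in> {0..n}" "SS (tk k1) = SS (tk k2)"
    have mem: "k \<in> SS (tk k)" if "0 < k" "k \<le> n" for k using that unfolding SStk x_def by auto
    have np: "\<not> p l \<le> 0" if "l \<in> {1..n}" for l using p_bounds[of l] that by auto
    have empty: "SS (tk 0) = {}" unfolding SStk x_def using np by auto
    show "k1 = k2"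
    proof (cases "k1 = 0 \<or> k2 = 0")
      case True
      show ?thesis
      proof (rule ccontr)
        assume ne: "k1 \<noteq> k2"
        then show False
        proof (cases "k1 = 0")
          case True
          then have "0 < k2" "k2 \<le> n" using ne k by auto
          then have "k2 \<in> SS (tk k1)" using mem k(3) by simp
          then show False using empty True by simp
        next
          case False
          then have "k2 = 0" "0 < k1" "k1 \<le> n" using \<open>k1 = 0 \<or> k2 = 0\<close> k by auto
          then have "k1 \<in> SS (tk k1)" using mem by simp
          then have "k1 \<in> SS (tk k2)" using k(3) by simp
          then show False using empty \<open>k2 = 0\<close> by simp
        qed
      qed
    next
      case False
      then have "k1 \<in> SS (tk k2)" "k2 \<in> SS (tk k1)" using k mem by auto
      then have "p k1 \<le> p k2" "p k2 \<le> p k1" unfolding SStk x_def using False by auto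
      then show ?thesis using p_inj False by force
    qed
  qed
  have "n + 1 = card ((\<lambda>k. SS (tk k)) ` {0..n})" using injk by (simp add: card_image)
  also have "\<dots> \<le> card (SS ` T)" by (rule card_mono[OF fin]) (use tkT in auto)
  finally show "card (factors vv n) = n + 1" unfolding fac c1 using up by simp
qed



lemma tau_w_append: "tau_w (x @ y) = tau_w x @ tau_w y" by (simp add: tau_w_def)
lemma tau_w_Cons: "tau_w (a # y) = tau a @ tau_w y" by (simp add: tau_w_def)
lemma tau_w_Nil: "tau_w [] = []" by (simp add: tau_w_def)

lemma map_upt_eq_tau: "map vv [P..<P + length (tau (vv n))] = tau (vv n)"
  if "P = nat (5 * int n - 2 * M n)" for P n
proof (rule nth_equalityI)
  show "length (map vv [P..<P + length (tau (vv n))]) = length (tau (vv n))" by simp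
  fix i assume "i < length (map vv [P..<P + length (tau (vv n))])"
  then have i: "i < length (tau (vv n))" by simp
  then show "map vv [P..<P + length (tau (vv n))] ! i = tau (vv n) ! i"
    using KL[OF i] that by simp
qed

lemma tau_pre: "tau_w (map vv [0..<n]) = map vv [0..<nat (5 * int n - 2 * M n)]"
proof (induction n)
  case 0
  then show ?case by (simp add: M0 tau_w_Nil)
next
  case (Suc n)
  define P where "P = nat (5 * int n - 2 * M n)"
  have len: "nat (5 * int (Suc n) - 2 * M (Suc n)) = P + length (tau (vv n))"
    unfolding P_def using M_Suc_vv[of n] M_le[of n] by (cases "vv n") auto
  have "tau_w (map vv [0..<Suc n]) = map vv [0..<P] @ tau (vv n)"
    using Suc by (simp add: tau_w_append tau_w_Cons tau_w_Nil P_def)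
  also have "\<dots> = map vv [0..<P] @ map vv [P..<P + length (tau (vv n))]"
    using map_upt_eq_tau[OF P_def] by simp
  also have "\<dots> = map vv [0..<P + length (tau (vv n))]"
    by (simp add: upt_add_eq_append[of 0 P] del: upt.simps)
  finally show ?case using len by simp
qed

lemma tau_len: "3 * length w \<le> length (tau_w w)"
proof (induction w)
  case Nil then show ?case by (simp add: tau_w_Nil)
next
  case (Cons a w)
  have "3 \<le> length (tau a)" by (cases a) auto
  then show ?case using Cons by (simp add: tau_w_Cons)
qed

lemma vv0: "vv 0 = A"
proof -
  have "M 1 = 0" unfolding M_def using al_lo al_hi by (simp add: floor_eq_iff)
  then show ?thesis by (simp add: vv_def M0)
qed

lemma tau_pow: "\<exists>m. (tau_w ^^ n) [A] = map vv [0..<m] \<and> n < m"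
proof (induction n)
  case 0
  then show ?case by (rule exI[of _ 1]) (simp add: vv0)
next
  case (Suc n)
  then obtain m where m: "(tau_w ^^ n) [A] = map vv [0..<m]" "n < m" by blast
  define P where "P = nat (5 * int m - 2 * M m)"
  have e: "(tau_w ^^ Suc n) [A] = map vv [0..<P]" using m tau_pre P_def by simp
  have "3 * m \<le> P" using tau_len[of "map vv [0..<m]"] e m by simp
  then show ?case using e m by (intro exI[of _ P]) auto
qed

lemma wl_intro:
  assumes "\<And>n. \<exists>m. ws n = map x [0..<m] \<and> n \<le> m"
  shows "word_limit x ws"
  unfolding word_limit_def
proof (intro allI exI[of _ _] impI)
  fix N n :: nat assume "N \<le> n"
  obtain m where m: "ws n = map x [0..<m]" "n \<le> m" using assms by blast
  show "N \<le> length (ws n) \<and> (\<forall>i<N. ws n ! i = x i)" using m \<open>N \<le> n\<close> by auto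
qed

lemma wl_unique:
  assumes "word_limit x ws" "word_limit y ws" shows "x = y"
proof
  fix i
  obtain n1 where n1: "\<forall>n\<ge>n1. Suc i \<le> length (ws n) \<and> (\<forall>j<Suc i. ws n ! j = x j)"
    using assms(1) unfolding word_limit_def by blast
  obtain n2 where n2: "\<forall>n\<ge>n2. Suc i \<le> length (ws n) \<and> (\<forall>j<Suc i. ws n ! j = y j)"
    using assms(2) unfolding word_limit_def by blast
  have "ws (max n1 n2) ! i = x i" using n1[rule_format, of "max n1 n2"] by simp
  moreover have "ws (max n1 n2) ! i = y i" using n2[rule_format, of "max n1 n2"] by simp
  ultimately show "x i = y i" by simp
qed

lemma sigma_w_append: "sigma_w (x @ y) = sigma_w x @ sigma_w y" by (simp add: sigma_w_def)
lemma sigma_pow_append: "(sigma_w ^^ k) (x @ y) = (sigma_w ^^ k) x @ (sigma_w ^^ k) y"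
  by (induction k) (auto simp: sigma_w_append)

lemma sigma3_block: "(sigma_w ^^ 3) (block a) = concat (map block (tau a))"
  by (cases a) (simp_all add: sigma_w_def numeral_3_eq_3)

lemma sigma3_blocks: "(sigma_w ^^ 3) (concat (map block w)) = concat (map block (tau_w w))"
proof (induction w)
  case Nil then show ?case by (simp add: tau_w_Nil sigma_w_def numeral_3_eq_3)
next
  case (Cons a w) then show ?case by (simp add: sigma_pow_append sigma3_block tau_w_Cons)
qed

fun W :: "nat \<Rightarrow> AB list" where
  "W 0 = []"
| "W (Suc n) = tau_w (W n) @ [A, B]"

lemma sig3_L2s: "(sigma_w ^^ 3) [L2s] = [L2s, L2, L1, L1s, L2s]"
  by (simp add: sigma_w_def numeral_3_eq_3)

lemma sigW: "(sigma_w ^^ (3 * n)) [L2s] = concat (map block (W n)) @ [L2s]"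
proof (induction n)
  case 0 then show ?case by simp
next
  case (Suc n)
  have "(sigma_w ^^ (3 * Suc n)) [L2s] = (sigma_w ^^ 3) ((sigma_w ^^ (3 * n)) [L2s])"
  proof -
    have "3 * Suc n = 3 + 3 * n" by simp
    then show ?thesis by (simp only: funpow_add comp_apply)
  qed
  also have "\<dots> = concat (map block (tau_w (W n))) @ [L2s, L2, L1, L1s, L2s]"
    unfolding Suc sigma_pow_append sigma3_blocks sig3_L2s ..
  also have "\<dots> = concat (map block (W (Suc n))) @ [L2s]" by simp
  finally show ?case .
qed

lemma W_len: "n \<le> length (W n)"
proof (induction n)
  case 0 then show ?case by simp
next
  case (Suc n) then show ?case using tau_len[of "W n"] by simp
qed

lemma W_pre: "W n @ [A] = map vv [0..<Suc (length (W n))]"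
proof (induction n)
  case 0 then show ?case by (simp add: vv0)
next
  case (Suc n)
  define m where "m = Suc (length (W n))"
  define P where "P = nat (5 * int m - 2 * M m)"
  have "map vv [0..<P] = tau_w (map vv [0..<m])" using tau_pre[of m] P_def by simp
  also have "\<dots> = tau_w (W n @ [A])" by (simp only: m_def Suc.IH)
  also have "\<dots> = (W (Suc n) @ [A]) @ [B, A]" by (simp add: tau_w_append tau_w_Cons tau_w_Nil)
  finally have e: "map vv [0..<P] = (W (Suc n) @ [A]) @ [B, A]" .
  define k where "k = Suc (length (W (Suc n)))"
  have kP: "k \<le> P" using arg_cong[OF e, of length] k_def by simp
  have "take k (map vv [0..<P]) = W (Suc n) @ [A]" unfolding e k_def by simp
  moreover have "take k (map vv [0..<P]) = map vv [0..<k]" using kP by (simp add: take_map take_upt)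
  ultimately show ?case unfolding k_def by simp
qed

definition u0 :: "nat \<Rightarrow> letter" where "u0 i = block (vv (i div 2)) ! (i mod 2)"

lemma blocks_u0: "concat (map (block \<circ> vv) [0..<n]) = map u0 [0..<2*n]"
proof (induction n)
  case 0 then show ?case by simp
next
  case (Suc n)
  have b: "block (vv n) = [u0 (2*n), u0 (Suc (2*n))]"
    unfolding u0_def by (cases "vv n") auto
  show ?case using Suc b by simp
qed

lemma sig_u0: "(sigma_w ^^ (3 * n)) [L2s] = map u0 [0..<Suc (2 * length (W n))]"
proof -
  define L where "L = length (W n)"
  have wp: "W n @ [A] = map vv [0..<L] @ [vv L]" using W_pre[of n] L_def by simp
  then have wn: "W n = map vv [0..<L]" and vl: "vv L = A" by simp_all
  have "u0 (2 * L) = L2s" unfolding u0_def using vl by simp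
  then show ?thesis unfolding sigW wn using blocks_u0[of L] L_def by (simp add: comp_def)
qed

lemma u_limit: "word_limit u0 (\<lambda>n. (sigma_w ^^ (3 * n)) [L2s])"
proof (rule wl_intro)
  fix n
  show "\<exists>m. (sigma_w ^^ (3 * n)) [L2s] = map u0 [0..<m] \<and> n \<le> m"
    using sig_u0[of n] W_len[of n] by (intro exI[of _ "Suc (2 * length (W n))"]) simp
qed



fun cnt :: "(nat \<Rightarrow> bool) \<Rightarrow> nat \<Rightarrow> nat \<Rightarrow> int" where
  "cnt z s 0 = 0"
| "cnt z s (Suc m) = cnt z s m + (if z (s + m) then 1 else 0)"

lemma cnt_add: "cnt z s (m + n) = cnt z s m + cnt z (s + m) n"
  by (induction n) (simp_all add: add.assoc)

lemma cnt_cong: "(\<And>j. j < m \<Longrightarrow> z (s + j) = z (s' + j)) \<Longrightarrow> cnt z s m = cnt z s' m"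
  by (induction m) auto

lemma cnt_blocks: "cnt z s (t * m) = (\<Sum>r<t. cnt z (s + r * m) m)"
proof (induction t)
  case 0 then show ?case by simp
next
  case (Suc t)
  have "cnt z s (Suc t * m) = cnt z s (t * m + m)" by (simp add: add.commute)
  also have "\<dots> = cnt z s (t * m) + cnt z (s + t * m) m" by (rule cnt_add)
  finally show ?case using Suc by simp
qed

lemma pow_unbounded:
  fixes d C :: real and Q :: nat
  assumes "2 \<le> Q" "\<And>m. \<bar>real (Q ^ m) * d\<bar> \<le> C"
  shows "d = 0"
proof (rule ccontr)
  assume d: "d \<noteq> 0"
  obtain m :: nat where m: "C / \<bar>d\<bar> < real m" using reals_Archimedean2 by blast
  have "real m < real (Q ^ m)"
  proof -
    have "m < 2 ^ m" by (rule less_exp)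
    also have "2 ^ m \<le> Q ^ m" using assms(1) by (simp add: power_mono)
    finally show ?thesis by simp
  qed
  have "C < real m * \<bar>d\<bar>" using m d by (simp add: field_simps)
  also have "\<dots> < real (Q ^ m) * \<bar>d\<bar>" using \<open>real m < real (Q ^ m)\<close> d
    by (intro mult_strict_right_mono) auto
  also have "\<dots> = \<bar>real (Q ^ m) * d\<bar>" by (simp add: abs_mult)
  finally show False using assms(2)[of m] by simp
qed

lemma auto_rational:
  fixes q :: nat and y :: "nat \<Rightarrow> nat" and h :: "nat \<Rightarrow> nat list" and z :: "nat \<Rightarrow> bool"
    and P :: "nat \<Rightarrow> bool" and S :: "nat set" and \<gamma> K :: real
  assumes q: "2 \<le> q" and hl: "\<forall>a\<in>S. length (h a) = q \<and> set (h a) \<subseteq> S"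
    and yS: "\<forall>i. y i \<in> S" and fx: "\<forall>i j. j < q \<longrightarrow> y (q * i + j) = h (y i) ! j"
    and fin: "finite S" and zP: "\<And>i. z i = P (y i)"
    and bal: "\<And>s m. \<bar>real_of_int (cnt z s m) - real m * \<gamma>\<bar> \<le> K"
  shows "\<gamma> \<in> \<rat>"
proof -
  have same_block: "y (q^k * i + j) = y (q^k * i' + j)" if "y i = y i'" "j < q^k" for k i i' j
    using that(2)
  proof (induction k arbitrary: j)
    case 0 then show ?case using that(1) by simp
  next
    case (Suc k)
    define j' where "j' = j div q"
    define t where "t = j mod q"
    have jd: "j = q * j' + t" unfolding j'_def t_def by simp
    have tq: "t < q" unfolding t_def using q by simp
    have q0: "0 < q" using q by simp
    have j'lt: "j' < q^k" using Suc.prems unfolding j'_def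
      using div_less_iff_less_mult[OF q0, of j "q^k"] by (simp add: mult.commute)
    have e1: "q^Suc k * i + j = q * (q^k * i + j') + t" "q^Suc k * i' + j = q * (q^k * i' + j') + t"
      unfolding jd by (simp_all add: algebra_simps)
    show ?case unfolding e1 using fx tq Suc.IH[OF j'lt] by simp
  qed
  define N where "N k a = cnt z (q^k * (SOME i. y i = a)) (q^k)" for k a
  have N_y: "N k (y i) = cnt z (q^k * i) (q^k)" for k i
  proof -
    define i' where "i' = (SOME i'. y i' = y i)"
    have "y i' = y i" unfolding i'_def by (rule someI_ex) blast
    then have "N k (y i) = cnt z (q^k * i') (q^k)" unfolding N_def i'_def by simp
    also have "\<dots> = cnt z (q^k * i) (q^k)"
      by (rule cnt_cong) (use same_block[OF \<open>y i' = y i\<close>] zP in auto)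
    finally show ?thesis .
  qed
  have hR: "h (y i) ! r = y (q * i + r)" if "r < q" for i r using fx that by simp
  have N_rec: "N (Suc k) (y i) = (\<Sum>r<q. N k (h (y i) ! r))" for k i
  proof -
    have "N (Suc k) (y i) = cnt z (q^Suc k * i) (q * q^k)" by (simp add: N_y)
    also have "\<dots> = (\<Sum>r<q. cnt z (q^Suc k * i + r * q^k) (q^k))" by (rule cnt_blocks)
    also have "\<dots> = (\<Sum>r<q. N k (h (y i) ! r))"
    proof (rule sum.cong)
      fix r assume "r \<in> {..<q}"
      then have "r < q" by simp
      have "q^Suc k * i + r * q^k = q^k * (q * i + r)" by (simp add: algebra_simps)
      then show "cnt z (q^Suc k * i + r * q^k) (q^k) = N k (h (y i) ! r)"
        using N_y hR[OF \<open>r < q\<close>] by simp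
    qed simp
    finally show ?thesis .
  qed
  have Nbd: "\<bar>real_of_int (N k (y i)) - real (q^k) * \<gamma>\<bar> \<le> K" for k i
    using bal[of "q^k * i" "q^k"] N_y[of k i] by simp
  define R where "R = range y"
  have Rfin: "finite R" using fin yS unfolding R_def by (meson finite_subset image_subsetI)
  define a0 where "a0 = y 0"
  have a0R: "a0 \<in> R" unfolding R_def a0_def by simp
  have hRR: "h a ! r \<in> R" if "a \<in> R" "r < q" for a r
    using that hR unfolding R_def by auto
  define D where "D k = restrict (\<lambda>a. N k a - N k a0) R" for k
  define Bd where "Bd = \<lceil>2 * K\<rceil>"
  have Dbd: "D k \<in> PiE R (\<lambda>_. {-Bd..Bd})" for k
  proof -
    have "N k a - N k a0 \<in> {-Bd..Bd}" if "a \<in> R" for a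
    proof -
      obtain i where i: "a = y i" using \<open>a \<in> R\<close> unfolding R_def by blast
      have "\<bar>real_of_int (N k a - N k a0)\<bar> \<le> 2 * K"
        using Nbd[of k i] Nbd[of k 0] unfolding i a0_def by simp
      then have "\<bar>N k a - N k a0\<bar> \<le> Bd" unfolding Bd_def by linarith
      then show ?thesis by (simp add: abs_le_iff)
    qed
    then show ?thesis unfolding D_def by (simp add: PiE_iff)
  qed
  define \<Phi> where "\<Phi> f = restrict (\<lambda>a. (\<Sum>r<q. f (h a ! r)) - (\<Sum>r<q. f (h a0 ! r))) R" for f :: "nat \<Rightarrow> int"
  define e where "e f = (\<Sum>r<q. f (h a0 ! r))" for f :: "nat \<Rightarrow> int"
  have sumD: "(\<Sum>r<q. N k (h a ! r)) = int q * N k a0 + (\<Sum>r<q. D k (h a ! r))" if "a \<in> R" for k a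
  proof -
    have "(\<Sum>r<q. N k (h a ! r)) = (\<Sum>r<q. N k a0 + D k (h a ! r))"
      by (rule sum.cong) (use hRR[OF that] in \<open>auto simp: D_def\<close>)
    then show ?thesis by (simp add: sum.distrib)
  qed
  have NSuc: "N (Suc k) a = (\<Sum>r<q. N k (h a ! r))" if "a \<in> R" for k a
    using that N_rec unfolding R_def by auto
  have D_Suc: "D (Suc k) = \<Phi> (D k)" for k
  proof
    fix a
    show "D (Suc k) a = \<Phi> (D k) a"
    proof (cases "a \<in> R")
      case True
      then show ?thesis unfolding D_def[of "Suc k"] \<Phi>_def
        using NSuc[OF True] NSuc[OF a0R] sumD[OF True] sumD[OF a0R] True by simp
    next
      case False then show ?thesis unfolding D_def \<Phi>_def by simp
    qed
  qed
  have N_Suc0: "N (Suc k) a0 = int q * N k a0 + e (D k)" for k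
    using NSuc[OF a0R] sumD[OF a0R] unfolding e_def by simp
  have D_iter: "D (k + j) = (\<Phi> ^^ j) (D k)" for k j
    by (induction j) (simp_all add: D_Suc)
  define G where "G j f = (\<Sum>l<j. int q ^ (j - 1 - l) * e ((\<Phi> ^^ l) f))" for j f
  have G_Suc: "G (Suc j) f = int q * G j f + e ((\<Phi> ^^ j) f)" for j f
  proof -
    have "G (Suc j) f = (\<Sum>l<j. int q ^ (j - l) * e ((\<Phi> ^^ l) f)) + e ((\<Phi> ^^ j) f)"
      unfolding G_def by simp
    also have "(\<Sum>l<j. int q ^ (j - l) * e ((\<Phi> ^^ l) f)) = int q * G j f"
      unfolding G_def sum_distrib_left
      by (rule sum.cong) (auto simp: Suc_diff_Suc power_Suc[symmetric] simp del: power_Suc)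
    finally show ?thesis .
  qed
  have N_iter: "N (k + j) a0 = int q ^ j * N k a0 + G j (D k)" for k j
  proof (induction j)
    case 0 then show ?case by (simp add: G_def)
  next
    case (Suc j)
    have "N (k + Suc j) a0 = int q * N (k + j) a0 + e (D (k + j))" using N_Suc0 by simp
    also have "\<dots> = int q ^ Suc j * N k a0 + G (Suc j) (D k)"
      unfolding Suc G_Suc D_iter by (simp add: algebra_simps)
    finally show ?case .
  qed
  have "\<not> inj D"
  proof
    assume "inj D"
    have fP: "finite (PiE R (\<lambda>_. {-Bd..Bd}))" by (intro finite_PiE Rfin) simp
    have "finite (range D)"
      by (rule finite_subset[OF _ fP]) (use Dbd in auto)
    then have "finite (UNIV :: nat set)" using \<open>inj D\<close> finite_imageD by blast
    then show False by simp
  qed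
  then obtain k0 k1 where kk: "k0 \<noteq> k1" "D k0 = D k1" unfolding inj_def by blast
  obtain k0 p where p: "0 < p" "D (k0 + p) = D k0"
  proof (cases "k0 < k1")
    case True then show ?thesis using that[of "k1 - k0" k0] kk by simp
  next
    case False then show ?thesis using that[of "k0 - k1" k1] kk by simp
  qed
  have Dper: "D (k0 + m * p) = D k0" for m
  proof (induction m)
    case 0 then show ?case by simp
  next
    case (Suc m)
    have "D (k0 + Suc m * p) = (\<Phi> ^^ p) (D (k0 + m * p))"
      using D_iter[of "k0 + m * p" p] by (simp add: algebra_simps)
    also have "\<dots> = (\<Phi> ^^ p) (D k0)" using Suc by simp
    also have "\<dots> = D k0" using D_iter[of k0 p] p by simp
    finally show ?case .
  qed
  define Q where "Q = q ^ p"
  define E where "E = G p (D k0)"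
  define Z where "Z m = N (k0 + m * p) a0" for m
  have Z_Suc: "Z (Suc m) = int Q * Z m + E" for m
  proof -
    have "Z (Suc m) = N ((k0 + m * p) + p) a0" unfolding Z_def by (simp add: algebra_simps)
    also have "\<dots> = int Q * Z m + E" unfolding N_iter Dper Z_def Q_def E_def by simp
    finally show ?thesis .
  qed
  define V where "V m = (int Q - 1) * Z m + E" for m
  have V_pow: "V m = int Q ^ m * V 0" for m
  proof (induction m)
    case 0 then show ?case by simp
  next
    case (Suc m)
    have "V (Suc m) = int Q * V m" unfolding V_def Z_Suc by (simp add: algebra_simps)
    then show ?case using Suc by simp
  qed
  have Q2: "2 \<le> Q" unfolding Q_def
  proof -
    have "q ^ 1 \<le> q ^ p" using p q by (intro power_increasing) auto
    then show "2 \<le> q ^ p" using q by simp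
  qed
  define d where "d = real_of_int (V 0) - (real Q - 1) * real (q ^ k0) * \<gamma>"
  have Zbd: "\<bar>real_of_int (Z m) - real (q ^ k0) * real (Q ^ m) * \<gamma>\<bar> \<le> K" for m
  proof -
    have "q ^ (k0 + m * p) = q ^ k0 * Q ^ m" unfolding Q_def by (simp add: power_add power_mult[symmetric] mult.commute)
    then show ?thesis using Nbd[of "k0 + m * p" 0] unfolding Z_def a0_def by simp
  qed
  have "\<bar>real (Q ^ m) * d\<bar> \<le> (real Q - 1) * K + \<bar>real_of_int E\<bar>" for m
  proof -
    have v1: "real_of_int (V m) = real (Q ^ m) * real_of_int (V 0)"
      by (subst V_pow) simp
    have v2: "real_of_int (V m) = (real Q - 1) * real_of_int (Z m) + real_of_int E"
      unfolding V_def using Q2 by simp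
    have eq: "real (Q ^ m) * d = (real Q - 1) * (real_of_int (Z m) - real (q ^ k0) * real (Q ^ m) * \<gamma>) + real_of_int E"
      unfolding d_def right_diff_distrib v1[symmetric] v2 by (simp add: algebra_simps)
    have "\<bar>(real Q - 1) * (real_of_int (Z m) - real (q ^ k0) * real (Q ^ m) * \<gamma>)\<bar> \<le> (real Q - 1) * K"
      using Zbd[of m] Q2 by (simp add: abs_mult mult_left_mono)
    then show ?thesis unfolding eq by linarith
  qed
  then have "d = 0" using Q2 by (intro pow_unbounded[of Q]) auto
  then have "\<gamma> = real_of_int (V 0) / ((real Q - 1) * real (q ^ k0))"
    unfolding d_def using Q2 q by (simp add: field_simps)
  also have "\<dots> \<in> \<rat>" by (intro Rats_divide Rats_mult Rats_diff) auto
  finally show ?thesis .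
qed



lemma cnt_u0: "cnt (\<lambda>i. u0 i = L1) 0 n = M ((n + 1) div 2)"
proof (induction n)
  case 0 then show ?case by (simp add: M0)
next
  case (Suc n)
  show ?case
  proof (cases "even n")
    case True
    then obtain k where k: "n = 2 * k" by blast
    have "u0 n = L1 \<longleftrightarrow> vv k = B" unfolding u0_def k by (cases "vv k") auto
    then show ?thesis using Suc k M_Suc_vv[of k] by auto
  next
    case False
    then obtain k where k: "n = 2 * k + 1" using oddE by blast
    have "u0 n \<noteq> L1" unfolding u0_def k by (cases "vv k") auto
    moreover have "(Suc n + 1) div 2 = (n + 1) div 2" using k by simp
    ultimately show ?thesis using Suc by simp
  qed
qed

lemma M_approx: "\<bar>real_of_int (M k) - real k * al\<bar> \<le> 1/2"
  unfolding M_def by linarith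

lemma cnt0_bal: "\<bar>real_of_int (cnt (\<lambda>i. u0 i = L1) 0 n) - real n * (al / 2)\<bar> \<le> 1"
proof -
  define k where "k = (n + 1) div 2"
  have kk: "real n \<le> 2 * real k" "2 * real k \<le> real n + 1" unfolding k_def by linarith+
  have "\<bar>real k * al - real n * (al/2)\<bar> \<le> al / 2"
  proof -
    have "real k * al - real n * (al/2) = (2 * real k - real n) * (al / 2)" by (simp add: algebra_simps)
    moreover have "0 \<le> (2 * real k - real n) * (al / 2)" using kk al_lo by simp
    moreover have "(2 * real k - real n) * (al / 2) \<le> 1 * (al / 2)"
      using al_lo kk by (intro mult_right_mono) auto
    ultimately show ?thesis by linarith
  qed
  moreover have "al \<le> 1" using al_hi by simp
  ultimately show ?thesis using M_approx[of k] unfolding cnt_u0 k_def[symmetric] by linarith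
qed

lemma cnt_bal: "\<bar>real_of_int (cnt (\<lambda>i. u0 i = L1) s m) - real m * (al / 2)\<bar> \<le> 2"
proof -
  have "cnt (\<lambda>i. u0 i = L1) 0 (s + m) = cnt (\<lambda>i. u0 i = L1) 0 s + cnt (\<lambda>i. u0 i = L1) s m"
    using cnt_add[of _ 0 s m] by simp
  then have e: "real_of_int (cnt (\<lambda>i. u0 i = L1) 0 (s + m)) = real_of_int (cnt (\<lambda>i. u0 i = L1) 0 s) + real_of_int (cnt (\<lambda>i. u0 i = L1) s m)"
    by simp
  have r: "real (s + m) * (al / 2) = real s * (al / 2) + real m * (al / 2)" by (simp add: algebra_simps)
  show ?thesis using cnt0_bal[of "s + m"] cnt0_bal[of s] e r by linarith
qed

lemma u0_not_auto: "2 \<le> q \<Longrightarrow> \<not> q_automatic q u0"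
proof
  assume q: "2 \<le> q" and "q_automatic q u0"
  then obtain S h y and c :: "nat \<Rightarrow> letter" where
    fin: "finite S" and hl: "\<forall>a\<in>S. length (h a) = q \<and> set (h a) \<subseteq> S"
    and yS: "\<forall>i. y i \<in> S" and fx: "\<forall>i j. j < q \<longrightarrow> y (q * i + j) = h (y i) ! j"
    and cu: "\<forall>i. u0 i = c (y i)"
    unfolding q_automatic_def by blast
  have "al / 2 \<in> \<rat>"
    by (rule auto_rational[OF q hl yS fx fin, of "\<lambda>i. u0 i = L1" "\<lambda>a. c a = L1" "al/2" 2])
       (use cu cnt_bal in auto)
  then have "2 * (al / 2) \<in> \<rat>" by (intro Rats_mult) auto
  then show False using al_irr by simp
qed

theorem mainTheorem12:
  shows "(\<exists>w. (sigma_w ^^ 3) [L2s] = L2s # w)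
    \<and> (\<exists>u. word_limit u (\<lambda>n. (sigma_w ^^ (3 * n)) [L2s]))
    \<and> (\<forall>u. word_limit u (\<lambda>n. (sigma_w ^^ (3 * n)) [L2s]) \<longrightarrow>
          (\<forall>q\<ge>2. \<not> q_automatic q u)
        \<and> (\<exists>v. word_limit u (\<lambda>n. concat (map (block \<circ> v) [0..<n]))
               \<and> word_limit v (\<lambda>n. (tau_w ^^ n) [A])
               \<and> sturmian v))"
proof (intro conjI allI impI)
  show "\<exists>w. (sigma_w ^^ 3) [L2s] = L2s # w" using sig3_L2s by blast
  show "\<exists>u. word_limit u (\<lambda>n. (sigma_w ^^ (3 * n)) [L2s])" using u_limit by blast
  fix u assume hu: "word_limit u (\<lambda>n. (sigma_w ^^ (3 * n)) [L2s])"
  have uu: "u = u0" by (rule wl_unique[OF hu u_limit])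
  show "\<not> q_automatic q u" if "2 \<le> q" for q using u0_not_auto[OF that] uu by simp
  have w1: "word_limit u0 (\<lambda>n. concat (map (block \<circ> vv) [0..<n]))"
  proof (rule wl_intro)
    fix n show "\<exists>m. concat (map (block \<circ> vv) [0..<n]) = map u0 [0..<m] \<and> n \<le> m"
      using blocks_u0[of n] by (intro exI[of _ "2 * n"]) simp
  qed
  have w2: "word_limit vv (\<lambda>n. (tau_w ^^ n) [A])"
  proof (rule wl_intro)
    fix n show "\<exists>m. (tau_w ^^ n) [A] = map vv [0..<m] \<and> n \<le> m"
      using tau_pow[of n] by (auto intro: less_imp_le)
  qed
  show "\<exists>v. word_limit u (\<lambda>n. concat (map (block \<circ> v) [0..<n]))
               \<and> word_limit v (\<lambda>n. (tau_w ^^ n) [A])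
               \<and> sturmian v"
    using w1 w2 vv_sturmian uu by blast
qed

end
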